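(* Let $U\subseteq\mathbb C^n$ be an open neighbourhood of $\{z\in\mathbb C^n:\mathrm{Re}\,z_i\ge0\ \forall i\}$ and $f:U\to\mathbb C$ holomorphic. Suppose $f(z)=\mathcal O(e^{c\|z\|_1})$ on $\{\mathrm{Re}\,z\ge0\}$ for some $c<\pi$, where $\|z\|_1=\sum_i|z_i|$, and $f(\lambda)=0$ for all $\lambda\in\Lambda_n^+=\{\lambda\in\mathbb N_0^n:\lambda_1\ge\dots\ge\lambda_n\}$. Then $f\equiv0$. *)

theory Defs
  imports "HOL-Analysis.Analysis"
begin

definition holomorphic_n :: "(complex ^ 'n \<Rightarrow> complex) \<Rightarrow> (complex ^ 'n) set \<Rightarrow> bool" where
  "holomorphic_n f U \<longleftrightarrow>
     (\<forall>z\<in>U. \<exists>L. (f has_derivative L) (at z) \<and> (\<forall>(c::complex) v. L (c *s v) = c * L v))"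

definition closed_orthant :: "(complex ^ 'n) set" where
  "closed_orthant = {z. \<forall>i. 0 \<le> Re (z $ i)}"

definition norm1 :: "complex ^ 'n \<Rightarrow> real" where
  "norm1 z = (\<Sum>i\<in>UNIV. norm (z $ i))"

definition dominant_weights :: "(complex, 'n::{finite,linorder}) vec set" where
  "dominant_weights = {(\<chi> i. of_nat (k $ i)) | k :: (nat, 'n) vec. \<forall>i j. i \<le> j \<longrightarrow> k $ j \<le> k $ i}"

end

theory Submission
  imports Defs "HOL-Complex_Analysis.Complex_Analysis"
begin

lemma norm_sin_ge_sinh:
  fixes w :: complex
  shows "norm (sin w) \<ge> (exp \<bar>Im w\<bar> - exp (-\<bar>Im w\<bar>)) / 2"
proof -
  have e1: "norm (exp (\<i> * w)) = exp (- Im w)" by simp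
  have e2: "norm (exp (-(\<i> * w))) = exp (Im w)" by simp
  have "norm (exp (\<i> * w) - exp (-(\<i> * w))) \<ge> \<bar>norm (exp (\<i> * w)) - norm (exp (-(\<i> * w)))\<bar>"
    by (rule norm_triangle_ineq3)
  also have "\<bar>norm (exp (\<i> * w)) - norm (exp (-(\<i> * w)))\<bar> = \<bar>exp (- Im w) - exp (Im w)\<bar>"
    using e1 e2 by simp
  also have "\<dots> \<ge> exp \<bar>Im w\<bar> - exp (-\<bar>Im w\<bar>)"
    by (cases "Im w \<ge> 0") (simp_all add: abs_if)
  finally have "norm (exp (\<i> * w) - exp (-(\<i> * w))) \<ge> exp \<bar>Im w\<bar> - exp (-\<bar>Im w\<bar>)" by linarith
  moreover have "norm (sin w) = norm (exp (\<i> * w) - exp (-(\<i> * w))) / 2"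
    by (simp add: sin_exp_eq norm_divide norm_mult)
  ultimately show ?thesis by simp
qed

lemma norm_sin_horiz:
  fixes z :: complex
  assumes "\<bar>Im z\<bar> \<ge> 1"
  shows "norm (sin (pi * z)) \<ge> exp (pi * \<bar>Im z\<bar>) / 4"
proof -
  have im: "\<bar>Im (pi * z)\<bar> = pi * \<bar>Im z\<bar>" by (simp add: abs_mult)
  have t: "pi * \<bar>Im z\<bar> \<ge> 1" using assms pi_gt3 mult_mono[of 1 pi 1 "\<bar>Im z\<bar>"] by simp
  have "exp (pi * \<bar>Im z\<bar>) * exp (pi * \<bar>Im z\<bar>) \<ge> 2"
  proof -
    have "exp (pi * \<bar>Im z\<bar>) \<ge> 1 + pi * \<bar>Im z\<bar>" by (rule exp_ge_add_one_self)
    then have "exp (pi * \<bar>Im z\<bar>) \<ge> 2" using t by linarith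
    then show ?thesis using mult_mono[of 2 "exp (pi * \<bar>Im z\<bar>)" 1 "exp (pi * \<bar>Im z\<bar>)"] by simp
  qed
  then have "exp (-(pi * \<bar>Im z\<bar>)) \<le> exp (pi * \<bar>Im z\<bar>) / 2"
    by (simp add: exp_minus field_simps)
  then show ?thesis using norm_sin_ge_sinh[of "pi * z"] im by simp
qed

lemma norm_cos_ii:
  fixes t :: real
  shows "norm (cos (\<i> * of_real t)) \<ge> exp \<bar>t\<bar> / 2"
proof -
  have "cos (\<i> * of_real t) = of_real ((exp (-t) + exp t) / 2)"
    by (simp add: cos_exp_eq exp_of_real[symmetric] of_real_exp)
  then have "norm (cos (\<i> * of_real t)) = \<bar>(exp (-t) + exp t) / 2\<bar>"
    by (simp only: norm_of_real)
  then have "norm (cos (\<i> * of_real t)) = (exp (-t) + exp t) / 2"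
    by (metis abs_of_pos add_pos_pos divide_pos_pos exp_gt_zero zero_less_numeral)
  moreover have "exp \<bar>t\<bar> \<le> exp (-t) + exp t" by (cases "t \<ge> 0") auto
  ultimately show ?thesis by simp
qed

lemma norm_sin_vert:
  fixes z :: complex and m :: nat
  assumes "Re z = real m + 1/2"
  shows "norm (sin (pi * z)) \<ge> exp (pi * \<bar>Im z\<bar>) / 2"
proof -
  define a where "a = pi * (real m + 1/2)"
  have z: "pi * z = of_real a + \<i> * of_real (pi * Im z)"
    using assms by (simp add: a_def complex_eq_iff)
  have "sin (pi * (real m + 1/2)) = cos (real m * pi)"
    by (simp add: distrib_left sin_add mult.commute)
  then have sa: "\<bar>sin a\<bar> = 1" by (simp add: cos_npi a_def)
  have ca: "cos a = 0" unfolding a_def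
    by (simp add: distrib_left cos_add mult.commute)
  have "sin (pi * z) = of_real (sin a) * cos (\<i> * of_real (pi * Im z))"
    unfolding z using ca by (simp add: sin_add sin_of_real cos_of_real)
  then have "norm (sin (pi * z)) = norm (cos (\<i> * of_real (pi * Im z)))"
    by (simp add: norm_mult sa)
  then show ?thesis using norm_cos_ii[of "pi * Im z"] by (simp add: abs_mult)
qed

lemma sin_pi_eq_0_iff: "sin (pi * (y::complex)) = 0 \<longleftrightarrow> (\<exists>m::int. y = of_int m)"
proof
  assume "sin (pi * y) = 0"
  then obtain m :: int where "pi * y = of_real (m * pi)" by (auto simp: sin_eq_0)
  then have "y = of_int m" by (simp add: field_simps)
  then show "\<exists>m::int. y = of_int m" by blast
next
  assume "\<exists>m::int. y = of_int m"
  then obtain m :: int where "y = of_int m" by blast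
  then have "pi * y = of_real (m * pi)" by simp
  then show "sin (pi * y) = 0" by (simp only: sin_eq_0) blast
qed

lemma sin_pi_zeros_sep:
  fixes y k :: complex
  assumes "sin (pi * y) = 0" "sin (pi * k) = 0" "norm (y - k) < 1"
  shows "y = k"
proof -
  obtain m n :: int where m: "y = of_int m" and n: "k = of_int n"
    using assms(1,2) by (auto simp: sin_pi_eq_0_iff)
  have "norm (of_int (m - n) :: complex) < 1" using assms(3) m n by simp
  then have "\<bar>m - n\<bar> < 1" by (simp only: norm_of_int)
  then have "m = n" by simp
  then show ?thesis using m n by simp
qed

abbreviation cpi :: complex where "cpi \<equiv> complex_of_real pi"

definition Gq :: "(complex \<Rightarrow> complex) \<Rightarrow> complex \<Rightarrow> complex" where
  "Gq h z = (if sin (cpi * z) = 0 then deriv h z / (cpi * cos (cpi * z))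
             else h z / sin (cpi * z))"

lemma Gq_tendsto:
  assumes "open V" "h holomorphic_on V" "k \<in> V" "sin (cpi * k) = 0" "h k = 0"
  shows "(Gq h \<longlongrightarrow> Gq h k) (at k)"
proof -
  have dh: "(h has_field_derivative deriv h k) (at k)"
    using assms by (simp add: holomorphic_derivI)
  have ds: "((\<lambda>y. sin (cpi * y)) has_field_derivative (cpi * cos (cpi * k))) (at k)"
    by (auto intro!: derivative_eq_intros)
  have l1: "((\<lambda>y. (h y - h k) / (y - k)) \<longlongrightarrow> deriv h k) (at k)"
    using dh by (simp add: has_field_derivative_iff)
  have l2: "((\<lambda>y. (sin (cpi * y) - sin (cpi * k)) / (y - k)) \<longlongrightarrow> cpi * cos (cpi * k)) (at k)"
    using ds by (simp add: has_field_derivative_iff)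
  have "(sin (cpi * k))\<^sup>2 + (cos (cpi * k))\<^sup>2 = 1" by (rule sin_cos_squared_add)
  then have c0: "cos (cpi * k) \<noteq> 0" using assms(4) by auto
  have l3: "((\<lambda>y. ((h y - h k) / (y - k)) / ((sin (cpi * y) - sin (cpi * k)) / (y - k)))
            \<longlongrightarrow> deriv h k / (cpi * cos (cpi * k))) (at k)"
    by (rule tendsto_divide[OF l1 l2]) (use c0 in simp)
  have ev: "eventually (\<lambda>y. ((h y - h k) / (y - k)) / ((sin (cpi * y) - sin (cpi * k)) / (y - k)) = Gq h y) (at k)"
    unfolding eventually_at
  proof (intro exI[of _ 1] conjI ballI impI allI)
    fix y assume y: "y \<noteq> k \<and> dist y k < 1"
    then have "sin (cpi * y) \<noteq> 0" using sin_pi_zeros_sep[of y k] assms(4) by (auto simp: dist_norm)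
    then show "((h y - h k) / (y - k)) / ((sin (cpi * y) - sin (cpi * k)) / (y - k)) = Gq h y"
      using y assms(4,5) by (simp add: Gq_def)
  qed simp
  have "Gq h k = deriv h k / (cpi * cos (cpi * k))" using assms(4) by (simp add: Gq_def)
  then show ?thesis using Lim_transform_eventually[OF l3 ev] by simp
qed

lemma Gq_holomorphic:
  assumes "open V" "h holomorphic_on V" "\<And>z. z \<in> V \<Longrightarrow> sin (cpi * z) = 0 \<Longrightarrow> h z = 0"
  shows "Gq h holomorphic_on V"
proof -
  have "Gq h field_differentiable (at z0)" if z0: "z0 \<in> V" for z0
  proof -
    define S where "S = V \<inter> ball z0 (1/2)"
    define K where "K = {w \<in> S. sin (cpi * w) = 0}"
    have oS: "open S" using assms(1) by (simp add: S_def open_Int)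
    have fK: "finite K"
    proof (cases "K = {}")
      case False
      then obtain k where k: "k \<in> K" by blast
      have "K \<subseteq> {k}"
      proof
        fix w assume w: "w \<in> K"
        have "norm (w - k) \<le> norm (w - z0) + norm (z0 - k)" by (rule norm_diff_triangle_ineq[of w z0 z0 k, simplified])
        also have "\<dots> < 1" using w k by (auto simp: K_def S_def dist_norm norm_minus_commute)
        finally show "w \<in> {k}" using sin_pi_zeros_sep[of w k] w k by (auto simp: K_def)
      qed
      then show ?thesis using finite_subset by blast
    qed simp
    have hS: "h holomorphic_on S" using assms(2) by (rule holomorphic_on_subset) (auto simp: S_def)
    have "(\<lambda>z. h z / sin (cpi * z)) holomorphic_on (S - K)"
      by (intro holomorphic_intros holomorphic_on_subset[OF hS]) (auto simp: K_def)
    then have h1: "Gq h holomorphic_on (S - K)"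
      by (rule holomorphic_transform) (auto simp: Gq_def K_def)
    have h2: "(Gq h \<longlongrightarrow> Gq h k) (at k within S)" if "k \<in> K" for k
      using Gq_tendsto[OF assms(1,2), of k] that assms(3) 
      by (auto simp: K_def S_def intro: tendsto_within_subset)
    have "Gq h holomorphic_on S" by (rule no_isolated_singularity'[OF h2 h1 oS fK])
    then show ?thesis using oS z0 by (auto simp: S_def intro: holomorphic_on_imp_differentiable_at)
  qed
  then show ?thesis by (simp add: holomorphic_on_def field_differentiable_at_within)
qed

lemma Re_powr_real:
  fixes w :: complex and a :: real
  assumes "w \<noteq> 0"
  shows "Re (w powr of_real a) = norm w powr a * cos (a * Im (Ln w))"
proof -
  have "w powr of_real a = exp (of_real a * Ln w)" using assms by (simp add: powr_def)
  then have "Re (w powr of_real a) = exp (a * ln (norm w)) * cos (a * Im (Ln w))"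
    using assms by (simp add: Re_exp)
  moreover have "norm w powr a = exp (a * ln (norm w))" using assms by (simp add: powr_def mult.commute)
  ultimately show ?thesis by simp
qed

lemma Re_powr_lower:
  fixes w :: complex and a :: real
  assumes "Re w \<ge> 0" "0 < a" "a \<le> 1"
  shows "Re (w powr of_real a) \<ge> norm w powr a * cos (a * pi / 2)"
proof (cases "w = 0")
  case True then show ?thesis by simp
next
  case False
  have i: "\<bar>Im (Ln w)\<bar> \<le> pi / 2" using Re_Ln_pos_le[OF False] assms(1) by simp
  have "\<bar>a * Im (Ln w)\<bar> \<le> a * pi / 2" using i assms(2) by (simp add: abs_mult mult_left_mono)
  moreover have "a * pi / 2 \<le> pi" using assms(3) pi_gt_zero by (simp add: mult_left_le_one_le)
  ultimately have "cos (a * pi / 2) \<le> cos \<bar>a * Im (Ln w)\<bar>"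
    by (intro cos_monotone_0_pi_le) auto
  then have "cos (a * pi / 2) \<le> cos (a * Im (Ln w))" by simp
  then show ?thesis using Re_powr_real[OF False, of a]
    by (simp add: mult_left_mono)
qed

lemma Re_powr_upper:
  fixes w :: complex and a :: real
  shows "Re (w powr of_real a) \<le> norm w powr a"
proof (cases "w = 0")
  case True then show ?thesis by simp
next
  case False
  then show ?thesis using Re_powr_real[OF False, of a]
    by (simp add: mult_left_le)
qed

lemma Re_powr_imag:
  fixes w :: complex and a :: real
  assumes "Re w = 0"
  shows "Re (w powr of_real a) = norm w powr a * cos (a * pi / 2)"
proof (cases "w = 0")
  case True then show ?thesis by simp
next
  case False
  have "\<bar>Im (Ln w)\<bar> \<le> pi / 2" using Re_Ln_pos_le[OF False] assms by simp
  moreover have "\<not> \<bar>Im (Ln w)\<bar> < pi / 2" using Re_Ln_pos_lt[OF False] assms by simp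
  ultimately have "\<bar>Im (Ln w)\<bar> = pi / 2" by simp
  then have "cos (a * Im (Ln w)) = cos (a * pi / 2)"
  proof (cases "Im (Ln w) \<ge> 0")
    case True
    then have "Im (Ln w) = pi / 2" using \<open>\<bar>Im (Ln w)\<bar> = pi / 2\<close> by simp
    then have "a * Im (Ln w) = a * pi / 2" by simp
    then show ?thesis by (simp only:)
  next
    case False
    then have "Im (Ln w) = - (pi / 2)" using \<open>\<bar>Im (Ln w)\<bar> = pi / 2\<close> by simp
    then have "a * Im (Ln w) = - (a * pi / 2)" by simp
    then show ?thesis by (simp only: cos_minus)
  qed
  then show ?thesis using Re_powr_real[OF False, of a] by simp
qed

lemma powr_dominate:
  fixes C p q r :: real
  assumes "0 \<le> C" "0 < p" "p < q" "r \<ge> C powr (1/(q-p))" "r > 0"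
  shows "C * r powr p \<le> r powr q"
proof -
  have "C = (C powr (1/(q-p))) powr (q - p)"
    using assms by (simp add: powr_powr)
  also have "\<dots> \<le> r powr (q - p)"
    using assms by (intro powr_mono2) auto
  finally have "C * r powr p \<le> r powr (q - p) * r powr p"
    by (simp add: mult_right_mono)
  also have "\<dots> = r powr q" using assms by (simp add: powr_add[symmetric])
  finally show ?thesis .
qed

lemma powr_minus_self_le_1:
  fixes y l :: real
  assumes "0 \<le> y" "0 < l" "l < 1"
  shows "y powr l - y \<le> 1"
proof (cases "y \<le> 1")
  case True
  then have "y powr l \<le> 1 powr l" using assms by (intro powr_mono2) auto
  then show ?thesis using assms by simp
next
  case False
  then have "y powr l \<le> y powr 1" using assms by (intro powr_mono) auto
  then show ?thesis using False by simp
qed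

locale carlson_setup =
  fixes h :: "complex \<Rightarrow> complex" and A c :: real
  assumes hol: "h holomorphic_on {z. Re z > 0}"
    and hb: "\<And>z. Re z > 0 \<Longrightarrow> norm (h z) \<le> A * exp (c * norm z)"
    and c0: "0 \<le> c" and cpi: "c < pi"
    and hz: "\<And>n::nat. n > 0 \<Longrightarrow> h (of_nat n) = 0"
begin

lemma A_nonneg: "0 \<le> A"
proof -
  have "0 \<le> norm (h 1)" by simp
  also have "\<dots> \<le> A * exp (c * norm (1::complex))" by (rule hb) simp
  finally show ?thesis by (simp add: zero_le_mult_iff)
qed

lemma G_holo: "Gq h holomorphic_on {z. Re z > 0}"
proof (rule Gq_holomorphic)
  show "open {z. Re z > 0}" by (simp add: open_halfspace_Re_gt)
  show "h holomorphic_on {z. Re z > 0}" by (rule hol)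
  fix z assume z: "z \<in> {z. Re z > 0}" "sin (cpi * z) = 0"
  then obtain m :: int where m: "z = of_int m" using sin_pi_eq_0_iff by blast
  then have "m > 0" using z by simp
  then have "z = of_nat (nat m)" using m by simp
  moreover have "h (of_nat (nat m)) = 0" by (rule hz) (use \<open>m > 0\<close> in simp)
  ultimately show "h z = 0" by (simp only:)
qed

lemma G_vert:
  assumes "Re z = real m + 1/2"
  shows "norm (Gq h z) \<le> 2 * A * exp (c * norm z - pi * \<bar>Im z\<bar>)"
proof -
  have s: "norm (sin (cpi * z)) \<ge> exp (pi * \<bar>Im z\<bar>) / 2" using norm_sin_vert[OF assms] by simp
  then have s0: "sin (cpi * z) \<noteq> 0" by (metis divide_pos_pos exp_gt_zero norm_zero not_less zero_less_numeral)
  have "norm (Gq h z) = norm (h z) / norm (sin (cpi * z))" using s0 by (simp add: Gq_def norm_divide)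
  also have "\<dots> \<le> A * exp (c * norm z) / (exp (pi * \<bar>Im z\<bar>) / 2)"
    using hb[of z] assms s A_nonneg by (intro frac_le) auto
  also have "\<dots> = 2 * A * exp (c * norm z - pi * \<bar>Im z\<bar>)" by (simp add: exp_diff)
  finally show ?thesis .
qed

lemma G_horiz:
  assumes "\<bar>Im z\<bar> \<ge> 1" "Re z > 0"
  shows "norm (Gq h z) \<le> 4 * A * exp (c * norm z - pi * \<bar>Im z\<bar>)"
proof -
  have s: "norm (sin (cpi * z)) \<ge> exp (pi * \<bar>Im z\<bar>) / 4" using norm_sin_horiz[OF assms(1)] by simp
  then have s0: "sin (cpi * z) \<noteq> 0" by (metis divide_pos_pos exp_gt_zero norm_zero not_less zero_less_numeral)
  have "norm (Gq h z) = norm (h z) / norm (sin (cpi * z))" using s0 by (simp add: Gq_def norm_divide)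
  also have "\<dots> \<le> A * exp (c * norm z) / (exp (pi * \<bar>Im z\<bar>) / 4)"
    using hb[of z] assms s A_nonneg by (intro frac_le) auto
  also have "\<dots> = 4 * A * exp (c * norm z - pi * \<bar>Im z\<bar>)" by (simp add: exp_diff)
  finally show ?thesis .
qed

lemma exp_bound_aux:
  assumes "Re z \<ge> 0"
  shows "c * norm z - pi * \<bar>Im z\<bar> \<le> c * Re z - (pi - c) * \<bar>Im z\<bar>"
proof -
  have "norm z \<le> Re z + \<bar>Im z\<bar>" using cmod_le[of z] assms by simp
  then have "c * norm z \<le> c * (Re z + \<bar>Im z\<bar>)" using c0 by (simp add: mult_left_mono)
  then show ?thesis by (simp add: algebra_simps)
qed

lemma exp_combine:
  fixes nG B Q P R :: real
  assumes "nG \<le> B * exp Q" "Q + P \<le> R" "0 \<le> B"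
  shows "nG * exp P \<le> B * exp R"
proof -
  have "nG * exp P \<le> B * exp Q * exp P" using assms(1) by (simp add: mult_right_mono)
  also have "\<dots> = B * exp (Q + P)" by (simp add: exp_add)
  also have "\<dots> \<le> B * exp R" using assms by (simp add: mult_left_mono)
  finally show ?thesis .
qed

lemma PL:
  assumes l: "0 < l" "l < 1" and e: "0 < e" and z0: "Re z0 > 1/2"
  shows "norm (Gq h z0 * exp (- of_real c * z0)
           * exp (of_real ((pi - c) / cos (l * pi / 2)) * (z0 - 1/2) powr of_real l)
           * exp (- of_real e * (z0 - 1/2) powr of_real ((1 + l) / 2)))
         \<le> 4 * A * exp (pi - c)"
proof -
  define \<delta> where "\<delta> = pi - c"
  define \<kappa> where "\<kappa> = cos (l * pi / 2)"
  define m where "m = (1 + l) / 2"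
  define \<kappa>m where "\<kappa>m = cos (m * pi / 2)"
  define k where "k = \<delta> / \<kappa>"
  have \<delta>0: "\<delta> > 0" using cpi by (simp add: \<delta>_def)
  have "0 < l * pi" "l * pi < pi" using l pi_gt_zero by auto
  then have \<kappa>0: "\<kappa> > 0" unfolding \<kappa>_def using pi_gt_zero by (intro cos_gt_zero_pi) linarith+
  have m: "l < m" "m < 1" "0 < m" using l by (auto simp: m_def)
  have "0 < m * pi" "m * pi < pi" using m pi_gt_zero by auto
  then have \<kappa>m0: "\<kappa>m > 0" unfolding \<kappa>m_def using pi_gt_zero by (intro cos_gt_zero_pi) linarith+
  have k0: "k > 0" using \<delta>0 \<kappa>0 by (simp add: k_def)
  define \<Phi> where "\<Phi> = (\<lambda>z. Gq h z * exp (- of_real c * z)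
           * exp (of_real k * (z - 1/2) powr of_real l)
           * exp (- of_real e * (z - 1/2) powr of_real m))"
  have nPhi: "norm (\<Phi> z) = norm (Gq h z) * exp (- c * Re z + k * Re ((z - 1/2) powr of_real l)
                 - e * Re ((z - 1/2) powr of_real m))" for z
  proof -
    have "norm (\<Phi> z) = norm (Gq h z) * exp (Re (- of_real c * z)) * exp (Re (of_real k * (z - 1/2) powr of_real l))
       * exp (Re (- of_real e * (z - 1/2) powr of_real m))"
      by (simp only: \<Phi>_def norm_mult norm_exp_eq_Re)
    also have "\<dots> = norm (Gq h z) * (exp (- c * Re z) * exp (k * Re ((z - 1/2) powr of_real l))
       * exp (- e * Re ((z - 1/2) powr of_real m)))"
      by simp
    also have "exp (- c * Re z) * exp (k * Re ((z - 1/2) powr of_real l))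
       * exp (- e * Re ((z - 1/2) powr of_real m)) = exp (- c * Re z + k * Re ((z - 1/2) powr of_real l)
                 - e * Re ((z - 1/2) powr of_real m))"
      by (simp add: exp_add[symmetric] exp_diff exp_minus field_simps)
    finally show ?thesis .
  qed
  define N0 where "N0 = (k / (e * \<kappa>m)) powr (1 / (m - l))"
  obtain N :: nat where N: "max (max N0 1) (Re z0) < real N"
    using reals_Archimedean2 by blast
  have N1: "real N \<ge> 1" "real N \<ge> N0" "real N > Re z0" using N by auto
  define T0 where "T0 = (2 * k / \<delta>) powr (1 / (1 - l))"
  define T where "T = max (max (real N) T0) (\<bar>Im z0\<bar> + 1)"
  have T: "T \<ge> real N" "T \<ge> T0" "T > \<bar>Im z0\<bar>" "T \<ge> 1" using N1 by (auto simp: T_def)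
  define S where "S = cbox (Complex (1/2) (-T)) (Complex (real N + 1/2) T)"
  have z0S: "z0 \<in> S" using z0 N1 T by (auto simp: S_def in_cbox_complex_iff abs_le_iff)
  have holG: "Gq h holomorphic_on {z. Re z > 0}" by (rule G_holo)
  have hol: "\<Phi> holomorphic_on {z. Re z > 1/2}"
  proof -
    have "Gq h holomorphic_on {z. Re z > 1/2}" by (rule holomorphic_on_subset[OF holG]) auto
    moreover have "(\<lambda>z. (z - 1/2) powr of_real a) holomorphic_on {z. Re z > 1/2}" for a :: real
      by (intro holomorphic_intros) (auto simp: complex_nonpos_Reals_iff)
    ultimately show ?thesis unfolding \<Phi>_def by (intro holomorphic_intros) (auto simp: complex_nonpos_Reals_iff)
  qed
  have cont: "continuous_on {z. Re z \<ge> 1/2} \<Phi>"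
  proof -
    have "continuous_on {z. Re z \<ge> 1/2} (Gq h)"
      by (rule holomorphic_on_imp_continuous_on, rule holomorphic_on_subset[OF holG]) auto
    moreover have "continuous_on {z. Re z \<ge> 1/2} (\<lambda>z. (z - 1/2) powr of_real a)" if "a > 0" for a :: real
      by (rule continuous_on_powr_complex) (auto intro!: continuous_intros simp: that)
    ultimately show ?thesis unfolding \<Phi>_def using l m
      by (intro continuous_intros) auto
  qed
  have "norm (\<Phi> z0) \<le> 4 * A * exp \<delta>"
  proof (rule maximum_modulus_frontier[of \<Phi> S])
    show "\<Phi> holomorphic_on interior S"
      by (rule holomorphic_on_subset[OF hol]) (auto simp: S_def in_box_complex_iff)
    show "continuous_on (closure S) \<Phi>"
      by (rule continuous_on_subset[OF cont]) (auto simp: S_def in_cbox_complex_iff)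
    show "bounded S" by (simp add: S_def)
    show "z0 \<in> S" by (rule z0S)
  next
    fix z assume zf: "z \<in> frontier S"
    then have zS: "z \<in> S" and znS: "z \<notin> box (Complex (1/2) (-T)) (Complex (real N + 1/2) T)"
      by (auto simp: frontier_def S_def)
    define x where "x = Re z"
    define y where "y = Im z"
    define w where "w = z - 1/2"
    have xy: "1/2 \<le> x" "x \<le> real N + 1/2" "-T \<le> y" "y \<le> T"
      using zS by (auto simp: S_def in_cbox_complex_iff x_def y_def)
    have cases: "x = 1/2 \<or> x = real N + 1/2 \<or> \<bar>y\<bar> = T"
      using znS xy by (auto simp: in_box_complex_iff x_def y_def)
    have Rew: "Re w = x - 1/2" "Im w = y" by (simp_all add: w_def x_def y_def)
    have wm: "Re (w powr of_real m) \<ge> 0"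
    proof -
      have "Re (w powr of_real m) \<ge> norm w powr m * \<kappa>m"
        unfolding \<kappa>m_def by (rule Re_powr_lower) (use Rew xy m in auto)
      then show ?thesis using \<kappa>m0 by (smt (verit) mult_nonneg_nonneg powr_ge_zero)
    qed
    have A0: "0 \<le> A" by (rule A_nonneg)
    have "norm (\<Phi> z) = norm (Gq h z) * exp (- c * x + k * Re (w powr of_real l) - e * Re (w powr of_real m))"
      by (simp add: nPhi x_def w_def)
    also have "\<dots> \<le> 4 * A * exp \<delta>"
    proof -
      have ed: "1 \<le> exp \<delta>" using \<delta>0 by simp
      have Rez: "Re z \<ge> 0" using xy by (simp add: x_def)
      have eb: "c * norm z - pi * \<bar>Im z\<bar> \<le> c * x - \<delta> * \<bar>y\<bar>"
        using exp_bound_aux[OF Rez] by (simp add: x_def y_def \<delta>_def)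
      have wl_up: "Re (w powr of_real l) \<le> norm w powr l" by (rule Re_powr_upper)
      have wm_low: "Re (w powr of_real m) \<ge> norm w powr m * \<kappa>m"
        unfolding \<kappa>m_def by (rule Re_powr_lower) (use Rew xy m in auto)
      consider "x = 1/2" | "x = real N + 1/2" | "\<bar>y\<bar> = T" using cases by blast
      then show ?thesis
      proof cases
        case 1
        have "norm (Gq h z) \<le> 2 * A * exp (c * norm z - pi * \<bar>Im z\<bar>)"
          by (rule G_vert[of z 0]) (use 1 in \<open>simp add: x_def\<close>)
        also have "\<dots> \<le> 2 * A * exp (c * x - \<delta> * \<bar>y\<bar>)"
          using eb A0 by (simp add: mult_left_mono)
        finally have g: "norm (Gq h z) \<le> 2 * A * exp (c * x - \<delta> * \<bar>y\<bar>)" .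
        have w0: "Re w = 0" using Rew 1 by simp
        have nw: "norm w = \<bar>y\<bar>" using w0 Rew by (simp add: cmod_eq_Im)
        have "Re (w powr of_real l) = \<bar>y\<bar> powr l * \<kappa>"
          using Re_powr_imag[OF w0, of l] nw by (simp add: \<kappa>_def)
        then have "k * Re (w powr of_real l) = \<delta> * \<bar>y\<bar> powr l"
          using \<kappa>0 by (simp add: k_def)
        moreover have "\<bar>y\<bar> powr l - \<bar>y\<bar> \<le> 1" using powr_minus_self_le_1[of "\<bar>y\<bar>" l] l by simp
        moreover have "0 \<le> e * Re (w powr of_real m)" using wm e by simp
        ultimately have "\<delta> * (\<bar>y\<bar> powr l - \<bar>y\<bar>) \<le> \<delta> * 1" "0 \<le> e * Re (w powr of_real m)"
          "k * Re (w powr of_real l) = \<delta> * \<bar>y\<bar> powr l"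
          using \<delta>0 by (simp_all add: mult_left_mono del: mult_1_right)
        then have "c * x - \<delta> * \<bar>y\<bar> + (- c * x + k * Re (w powr of_real l) - e * Re (w powr of_real m)) \<le> \<delta>"
          by (simp add: right_diff_distrib)
        then have "norm (Gq h z) * exp (- c * x + k * Re (w powr of_real l) - e * Re (w powr of_real m)) \<le> 2 * A * exp \<delta>"
          using g A0 by (intro exp_combine) auto
        moreover have "0 \<le> A * exp \<delta>" using A0 by simp
        ultimately show ?thesis by linarith
      next
        case 2
        have "norm (Gq h z) \<le> 2 * A * exp (c * norm z - pi * \<bar>Im z\<bar>)"
          by (rule G_vert[of z N]) (use 2 in \<open>simp add: x_def\<close>)
        also have "\<dots> \<le> 2 * A * exp (c * x - \<delta> * \<bar>y\<bar>)"
          using eb A0 by (simp add: mult_left_mono)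
        finally have g: "norm (Gq h z) \<le> 2 * A * exp (c * x - \<delta> * \<bar>y\<bar>)" .
        have "norm w \<ge> Re w" by (rule complex_Re_le_cmod)
        then have nwN: "norm w \<ge> real N" using Rew 2 by simp
        then have nw0: "norm w > 0" using N1 by linarith
        have "(k / (e * \<kappa>m)) * norm w powr l \<le> norm w powr m"
          using k0 e \<kappa>m0 m nwN N1 nw0 l by (intro powr_dominate) (auto simp: N0_def)
        then have "k * norm w powr l \<le> e * (norm w powr m * \<kappa>m)"
          using e \<kappa>m0 by (simp add: field_simps)
        moreover have "e * (norm w powr m * \<kappa>m) \<le> e * Re (w powr of_real m)"
          using wm_low e by simp
        moreover have "k * Re (w powr of_real l) \<le> k * norm w powr l"
          using wl_up k0 by simp
        ultimately have "c * x - \<delta> * \<bar>y\<bar> + (- c * x + k * Re (w powr of_real l) - e * Re (w powr of_real m)) \<le> 0"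
          using \<delta>0 mult_nonneg_nonneg[of \<delta> "\<bar>y\<bar>"] by linarith
        then have "norm (Gq h z) * exp (- c * x + k * Re (w powr of_real l) - e * Re (w powr of_real m)) \<le> 2 * A * exp 0"
          using g A0 by (intro exp_combine) auto
        moreover have "A \<le> A * exp \<delta>" using A0 ed mult_left_mono[of 1 "exp \<delta>" A] by simp
        ultimately show ?thesis using A0 by simp
      next
        case 3
        have "norm (Gq h z) \<le> 4 * A * exp (c * norm z - pi * \<bar>Im z\<bar>)"
          by (rule G_horiz) (use 3 T xy in \<open>auto simp: x_def y_def\<close>)
        also have "\<dots> \<le> 4 * A * exp (c * x - \<delta> * \<bar>y\<bar>)"
          using eb A0 by (simp add: mult_left_mono)
        finally have g: "norm (Gq h z) \<le> 4 * A * exp (c * x - \<delta> * \<bar>y\<bar>)" .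
        have "norm w \<le> \<bar>Re w\<bar> + \<bar>Im w\<bar>" by (rule cmod_le)
        then have nw: "norm w \<le> 2 * T" using Rew xy 3 T by simp
        have "norm w powr l \<le> (2 * T) powr l" using nw l by (intro powr_mono2) auto
        also have "\<dots> = 2 powr l * T powr l" using T by (simp add: powr_mult)
        also have "\<dots> \<le> 2 * T powr l"
        proof -
          have "2 powr l \<le> 2 powr 1" using l by (intro powr_mono) auto
          then show ?thesis by (simp add: mult_right_mono)
        qed
        finally have nwl: "norm w powr l \<le> 2 * T powr l" .
        have "(2 * k / \<delta>) * T powr l \<le> T powr 1"
          using k0 \<delta>0 l T by (intro powr_dominate) (auto simp: T0_def)
        then have "2 * k * T powr l \<le> \<delta> * T" using \<delta>0 T by (simp add: field_simps)
        moreover have "k * Re (w powr of_real l) \<le> k * (2 * T powr l)"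
          using wl_up nwl k0 mult_left_mono[of "Re (w powr of_real l)" "2 * T powr l" k] by simp
        moreover have "e * Re (w powr of_real m) \<ge> 0" using e wm by simp
        moreover have "k * (2 * T powr l) = 2 * k * T powr l" by simp
        moreover have "\<delta> * \<bar>y\<bar> = \<delta> * T" using 3 by simp
        ultimately have "c * x - \<delta> * \<bar>y\<bar> + (- c * x + k * Re (w powr of_real l) - e * Re (w powr of_real m)) \<le> 0"
          using 3 by linarith
        then have "norm (Gq h z) * exp (- c * x + k * Re (w powr of_real l) - e * Re (w powr of_real m)) \<le> 4 * A * exp 0"
          using g A0 by (intro exp_combine) auto
        moreover have "A \<le> A * exp \<delta>" using A0 ed mult_left_mono[of 1 "exp \<delta>" A] by simp
        ultimately show ?thesis using A0 by simp
      qed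
    qed
    finally show "norm (\<Phi> z) \<le> 4 * A * exp \<delta>" .
  qed
  then show ?thesis by (simp add: \<Phi>_def k_def m_def \<delta>_def \<kappa>_def)
qed

lemma G_real_zero:
  assumes x: "x \<ge> 3/2"
  shows "Gq h (of_real x) = 0"
proof -
  define \<delta> where "\<delta> = pi - c"
  define M where "M = 4 * A * exp \<delta>"
  define a where "a = norm (Gq h (of_real x)) * exp (- c * x)"
  define w0 where "w0 = x - 1/2"
  have w0: "w0 \<ge> 1" using x by (simp add: w0_def)
  have \<delta>0: "\<delta> > 0" using cpi by (simp add: \<delta>_def)
  have a0: "a \<ge> 0" by (simp add: a_def)
  have M0: "M \<ge> 0" using A_nonneg by (simp add: M_def)
  have zw: "complex_of_real x - 1/2 = of_real w0" by (simp add: w0_def)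
  have step1: "a * exp ((pi - c) / cos (l * pi / 2) * w0 powr l) \<le> M * exp (e * w0 powr ((1 + l) / 2))"
    if l: "0 < l" "l < 1" and e: "0 < e" for l e
  proof -
    have "norm (Gq h (of_real x) * exp (- of_real c * of_real x)
           * exp (of_real ((pi - c) / cos (l * pi / 2)) * (of_real x - 1/2) powr of_real l)
           * exp (- of_real e * (of_real x - 1/2) powr of_real ((1 + l) / 2)))
         \<le> 4 * A * exp (pi - c)"
      by (rule PL) (use l e x in auto)
    also have "norm (Gq h (of_real x) * exp (- of_real c * of_real x)
           * exp (of_real ((pi - c) / cos (l * pi / 2)) * (of_real x - 1/2) powr of_real l)
           * exp (- of_real e * (of_real x - 1/2) powr of_real ((1 + l) / 2)))
         = a * exp ((pi - c) / cos (l * pi / 2) * w0 powr l) * exp (- e * w0 powr ((1 + l) / 2))"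
    proof -
      have p1: "(complex_of_real w0) powr (complex_of_real l) = of_real (w0 powr l)"
        using w0 by (intro powr_of_real) simp
      have p2: "(complex_of_real w0) powr (complex_of_real ((1 + l) / 2)) = of_real (w0 powr ((1 + l) / 2))"
        using w0 by (intro powr_of_real) simp
      show ?thesis unfolding zw p1 p2 by (simp add: a_def norm_mult del: of_real_diff)
    qed
    finally have "a * exp ((pi - c) / cos (l * pi / 2) * w0 powr l) * exp (- e * w0 powr ((1 + l) / 2)) \<le> M"
      by (simp add: M_def \<delta>_def)
    then show ?thesis by (simp add: exp_minus field_simps)
  qed
  have step2: "a * exp ((pi - c) / cos (l * pi / 2) * w0 powr l) \<le> M" if l: "0 < l" "l < 1" for l
  proof -
    define b where "b = w0 powr ((1 + l) / 2)"
    have lim: "((\<lambda>e. M * exp (e * b)) \<longlongrightarrow> M * exp (0 * b)) (at_right 0)"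
      by (intro tendsto_intros)
    have ev: "eventually (\<lambda>e. a * exp ((pi - c) / cos (l * pi / 2) * w0 powr l) \<le> M * exp (e * b)) (at_right (0::real))"
      unfolding eventually_at_right_field using step1[OF l] b_def by (intro exI[of _ 1]) auto
    show ?thesis using tendsto_le[OF _ lim tendsto_const ev] by simp
  qed
  have step3: "a * \<delta> \<le> M * cos (l * pi / 2)" if l: "0 < l" "l < 1" for l
  proof -
    have "0 < l * pi" "l * pi < pi" using l pi_gt_zero by auto
    then have \<kappa>0: "cos (l * pi / 2) > 0" using pi_gt_zero by (intro cos_gt_zero_pi) linarith+
    have "1 \<le> w0 powr l" using w0 l by (intro ge_one_powr_ge_zero) auto
    then have "\<delta> / cos (l * pi / 2) \<le> \<delta> / cos (l * pi / 2) * w0 powr l"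
      using \<delta>0 \<kappa>0 mult_left_mono[of 1 "w0 powr l" "\<delta> / cos (l * pi / 2)"] by simp
    also have "\<dots> \<le> exp (\<delta> / cos (l * pi / 2) * w0 powr l)"
      using exp_ge_add_one_self[of "\<delta> / cos (l * pi / 2) * w0 powr l"] by linarith
    finally have "a * (\<delta> / cos (l * pi / 2)) \<le> a * exp (\<delta> / cos (l * pi / 2) * w0 powr l)"
      using a0 by (rule mult_left_mono)
    also have "\<dots> \<le> M" using step2[OF l] by (simp add: \<delta>_def)
    finally show ?thesis using \<kappa>0 by (simp add: field_simps)
  qed
  have "a * \<delta> \<le> 0"
  proof (rule field_le_epsilon)
    fix t :: real assume t: "0 < t"
    define s where "s = min (1/2) (t / (M * pi / 2 + 1))"
    have "0 < M * pi / 2 + 1" using M0 pi_gt_zero by (simp add: add_nonneg_pos)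
    then have s: "0 < s" "s < 1" using t by (auto simp: s_def)
    have "a * \<delta> \<le> M * cos ((1 - s) * pi / 2)" using step3[of "1 - s"] s by simp
    also have "cos ((1 - s) * pi / 2) = sin (s * pi / 2)"
    proof -
      have "pi / 2 - (1 - s) * pi / 2 = s * pi / 2" by (simp add: field_simps)
      then show ?thesis by (simp only: cos_sin_eq[of "(1 - s) * pi / 2"] of_real_eq_id id_def)
    qed
    also have "sin (s * pi / 2) \<le> s * pi / 2" using s by (intro sin_x_le_x) simp
    then have "M * sin (s * pi / 2) \<le> M * (s * pi / 2)" using M0 by (rule mult_left_mono)
    also have "M * (s * pi / 2) = (M * pi / 2) * s" by simp
    also have "\<dots> \<le> (M * pi / 2 + 1) * (t / (M * pi / 2 + 1))"
      using M0 pi_gt_zero s by (intro mult_mono) (auto simp: s_def)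
    also have "\<dots> = t" using \<open>0 < M * pi / 2 + 1\<close> by simp
    finally show "a * \<delta> \<le> 0 + t" by simp
  qed
  then have "a = 0" using a0 \<delta>0 by (simp add: mult_le_0_iff)
  then show ?thesis by (simp add: a_def)
qed

lemma h_real_zero:
  assumes x: "x \<ge> 3/2"
  shows "h (of_real x) = 0"
proof (cases "sin (cpi * of_real x) = 0")
  case True
  then obtain m :: int where m: "complex_of_real x = of_int m" using sin_pi_eq_0_iff by blast
  then have "real_of_int m = x" by (metis Re_complex_of_real of_real_of_int_eq)
  then have "m > 0" using x by simp
  then have "complex_of_real x = of_nat (nat m)" using m by simp
  moreover have "h (of_nat (nat m)) = 0" by (rule hz) (use \<open>m > 0\<close> in simp)
  ultimately show ?thesis by (simp only:)
next
  case False
  then have "h (of_real x) = Gq h (of_real x) * sin (cpi * of_real x)" by (simp add: Gq_def)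
  then show ?thesis using G_real_zero[OF x] by simp
qed

end

lemma bounded_linear_smult_left:
  fixes d :: "complex ^ 'n"
  shows "bounded_linear (\<lambda>t::complex. t *s d)"
proof (rule bounded_linear_intro[where K = "\<Sum>i\<in>UNIV. norm (d $ i)"])
  show "(x + y) *s d = x *s d + y *s d" for x y :: complex
    by (simp add: vec_eq_iff distrib_right)
  show "(r *\<^sub>R x) *s d = r *\<^sub>R (x *s d)" for r :: real and x :: complex
    by (simp add: vec_eq_iff)
  show "norm (x *s d) \<le> norm x * (\<Sum>i\<in>UNIV. norm (d $ i))" for x :: complex
  proof -
    have "norm (x *s d) \<le> (\<Sum>i\<in>UNIV. norm ((x *s d) $ i))"
      unfolding norm_vec_def by (rule L2_set_le_sum) simp
    also have "\<dots> = norm x * (\<Sum>i\<in>UNIV. norm (d $ i))" by (simp add: norm_mult sum_distrib_left)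
    finally show ?thesis .
  qed
qed

lemma line_holomorphic:
  fixes f :: "complex ^ 'n \<Rightarrow> complex"
  assumes "holomorphic_n f U"
  shows "(\<lambda>t. f (q + t *s d)) holomorphic_on {t. q + t *s d \<in> U}"
proof -
  have *: "((\<lambda>t. f (q + t *s d)) has_field_derivative L d) (at t)"
    if t: "q + t *s d \<in> U" and L: "(f has_derivative L) (at (q + t *s d))" "\<forall>(c::complex) v. L (c *s v) = c * L v"
    for t L
  proof -
    have d1: "((\<lambda>t. q + t *s d) has_derivative (\<lambda>h. h *s d)) (at t)"
      using bounded_linear_smult_left[of d]
      by (intro derivative_eq_intros) (auto simp: bounded_linear_imp_has_derivative)
    have "((\<lambda>t. f (q + t *s d)) has_derivative (\<lambda>h. L (h *s d))) (at t)"
      using has_derivative_compose[OF d1 L(1)] by (simp add: o_def)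
    moreover have "(\<lambda>h. L (h *s d)) = (*) (L d)" using L(2) by (auto simp: mult.commute)
    ultimately show ?thesis by (simp add: has_field_derivative_def)
  qed
  show ?thesis unfolding holomorphic_on_def field_differentiable_def
  proof (intro ballI)
    fix t assume "t \<in> {t. q + t *s d \<in> U}"
    then have t: "q + t *s d \<in> U" by simp
    then obtain L where "(f has_derivative L) (at (q + t *s d))" "\<forall>(c::complex) v. L (c *s v) = c * L v"
      using assms unfolding holomorphic_n_def by blast
    from *[OF t this] have "((\<lambda>t. f (q + t *s d)) has_field_derivative L d) (at t)" .
    then show "\<exists>f'. ((\<lambda>t. f (q + t *s d)) has_field_derivative f') (at t within {t. q + t *s d \<in> U})"
      by (blast intro: has_field_derivative_at_within)
  qed
qed

lemma halfplane_zero_ext: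
  fixes g :: "complex \<Rightarrow> complex" and a :: real
  assumes S: "open S" "{t. Re t \<ge> 0} \<subseteq> S" and hol: "g holomorphic_on S"
    and z: "\<And>y. y \<ge> a \<Longrightarrow> g (of_real y) = 0" and a: "a \<ge> 0"
    and t: "Re t \<ge> 0"
  shows "g t = 0"
proof -
  define W where "W = connected_component_set S 0"
  have oW: "open W" using S by (simp add: W_def open_connected_component)
  have cW: "connected W" by (simp add: W_def)
  have HW: "{t. Re t \<ge> 0} \<subseteq> W" unfolding W_def
    by (rule connected_component_maximal)
       (use S in \<open>auto intro: convex_connected convex_halfspace_Re_ge\<close>)
  define U0 :: "complex set" where "U0 = of_real ` {a..}"
  have U0W: "U0 \<subseteq> W" using HW a by (auto simp: U0_def)
  have xi: "complex_of_real (a + 1) \<in> W" using HW a by auto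
  have lim: "complex_of_real (a + 1) islimpt U0"
    unfolding islimpt_approachable
  proof (intro allI impI)
    fix e :: real assume e: "0 < e"
    define x' where "x' = complex_of_real (a + 1 + min 1 e / 2)"
    have "a + 1 + min 1 e / 2 \<in> {a..}" using e by simp
    then have "x' \<in> U0" unfolding U0_def x'_def by (rule imageI)
    moreover have "x' \<noteq> complex_of_real (a + 1)" using e by (simp add: x'_def)
    moreover have "dist x' (complex_of_real (a + 1)) < e"
      using e by (simp add: x'_def dist_norm) 
    ultimately show "\<exists>x'\<in>U0. x' \<noteq> complex_of_real (a + 1) \<and> dist x' (complex_of_real (a + 1)) < e"
      by blast
  qed
  have holW: "g holomorphic_on W"
    by (rule holomorphic_on_subset[OF hol]) (simp add: W_def connected_component_subset)
  show ?thesis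
    by (rule analytic_continuation[OF holW oW cW U0W xi lim]) (use z HW t in \<open>auto simp: U0_def\<close>)
qed

lemma slice_carlson:
  fixes g :: "complex \<Rightarrow> complex" and c C R :: real and m0 :: nat
  assumes S: "open S" "{t. Re t \<ge> 0} \<subseteq> S" and hol: "g holomorphic_on S"
    and c: "0 \<le> c" "c < pi"
    and bd: "\<And>t. Re t \<ge> 0 \<Longrightarrow> norm t \<ge> R \<Longrightarrow> norm (g t) \<le> C * exp (c * norm t)"
    and z: "\<And>n::nat. g (of_nat (m0 + n)) = 0"
    and t: "Re t \<ge> 0"
  shows "g t = 0"
proof -
  define K where "K = {t. Re t \<ge> 0} \<inter> cball 0 R"
  have cK: "compact K" unfolding K_def
    by (intro closed_Int_compact closed_halfspace_Re_ge compact_cball)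
  have "continuous_on K g"
    by (rule holomorphic_on_imp_continuous_on, rule holomorphic_on_subset[OF hol]) (use S in \<open>auto simp: K_def\<close>)
  then have "compact (g ` K)" using cK by (rule compact_continuous_image)
  then obtain B where B: "\<And>t. t \<in> K \<Longrightarrow> norm (g t) \<le> B"
    using compact_imp_bounded[of "g ` K"] by (auto simp: bounded_iff)
  define A where "A = max B 0 + max C 0"
  have A0: "A \<ge> 0" by (simp add: A_def)
  have gb: "norm (g t) \<le> A * exp (c * norm t)" if "Re t \<ge> 0" for t
  proof (cases "norm t \<ge> R")
    case True
    then have "norm (g t) \<le> C * exp (c * norm t)" using bd that by simp
    also have "\<dots> \<le> A * exp (c * norm t)" by (intro mult_right_mono) (auto simp: A_def)
    finally show ?thesis .
  next
    case False
    then have "t \<in> K" using that by (simp add: K_def)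
    then have "norm (g t) \<le> B" by (rule B)
    also have "B \<le> A * 1" by (simp add: A_def)
    also have "A * 1 \<le> A * exp (c * norm t)" using A0 c by (intro mult_left_mono) auto
    finally show ?thesis .
  qed
  define h where "h = (\<lambda>w. g (w + of_nat m0))"
  interpret cs: carlson_setup h "A * exp (c * m0)" c
  proof
    have "(g \<circ> (\<lambda>w. w + of_nat m0)) holomorphic_on {z. Re z > 0}"
      by (rule holomorphic_on_compose_gen[OF _ hol]) (use S in \<open>auto intro!: holomorphic_intros\<close>)
    then show "h holomorphic_on {z. Re z > 0}" by (simp add: h_def o_def)
    show "0 \<le> c" "c < pi" by (rule c)+
    fix w :: complex assume w: "Re w > 0"
    have "norm (h w) \<le> A * exp (c * norm (w + of_nat m0))" unfolding h_def by (rule gb) (use w in simp)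
    also have "\<dots> \<le> A * exp (c * (norm w + m0))"
      using A0 c norm_triangle_ineq[of w "of_nat m0"] by (intro mult_left_mono) (auto intro!: mult_left_mono)
    also have "\<dots> = A * exp (c * m0) * exp (c * norm w)" by (simp add: distrib_left exp_add)
    finally show "norm (h w) \<le> A * exp (c * m0) * exp (c * norm w)" .
  next
    fix n :: nat assume "n > 0"
    have "h (of_nat n) = g (of_nat (m0 + n))" by (simp add: h_def add.commute)
    then show "h (of_nat n) = 0" using z by simp
  qed
  have "g (of_real y) = 0" if "y \<ge> 3/2 + m0" for y
  proof -
    have "h (of_real (y - m0)) = 0" by (rule cs.h_real_zero) (use that in simp)
    then show ?thesis by (simp add: h_def)
  qed
  then show ?thesis by (intro halfplane_zero_ext[OF S hol _ _ t, of "3/2 + m0"]) auto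
qed

lemma norm_smult_le:
  fixes d :: "complex ^ 'n"
  shows "norm (t *s d) \<le> norm t * (\<Sum>i\<in>UNIV. norm (d $ i))"
proof -
  have "norm (t *s d) \<le> (\<Sum>i\<in>UNIV. norm ((t *s d) $ i))"
    unfolding norm_vec_def by (rule L2_set_le_sum) simp
  also have "\<dots> = norm t * (\<Sum>i\<in>UNIV. norm (d $ i))" by (simp add: norm_mult sum_distrib_left)
  finally show ?thesis .
qed

lemma isCont_line: "isCont (\<lambda>t::complex. q + t *s (d :: complex ^ 'n)) t"
proof -
  have "((\<lambda>t. q + t *s d) has_derivative (\<lambda>h. h *s d)) (at t)"
    using bounded_linear_smult_left[of d]
    by (intro derivative_eq_intros) (auto simp: bounded_linear_imp_has_derivative)
  then show ?thesis by (rule has_derivative_continuous)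
qed

lemma ball_zero_spread:
  fixes f :: "complex ^ 'n \<Rightarrow> complex"
  assumes hol: "holomorphic_n f U" and bU: "ball z e \<subseteq> U"
    and q: "q \<in> ball z e" and r: "r > 0" and fq: "\<And>w. w \<in> ball q r \<Longrightarrow> f w = 0"
    and w: "w \<in> ball z e"
  shows "f w = 0"
proof -
  define d where "d = w - q"
  define P where "P = {t. q + t *s d \<in> ball z e}"
  define T where "T = connected_component_set P 0"
  define g where "g = (\<lambda>t. f (q + t *s d))"
  have "open ((\<lambda>t. q + t *s d) -` ball z e)"
    by (rule continuous_open_vimage) (auto intro: isCont_line)
  then have oP: "open P" unfolding P_def by (simp add: vimage_def)
  have oT: "open T" using oP by (simp add: T_def open_connected_component)
  have cT: "connected T" by (simp add: T_def)
  have TP: "T \<subseteq> P" by (simp add: T_def connected_component_subset)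
  have holg: "g holomorphic_on T"
  proof -
    have "g holomorphic_on {t. q + t *s d \<in> U}" unfolding g_def by (rule line_holomorphic[OF hol])
    moreover have "T \<subseteq> {t. q + t *s d \<in> U}"
    proof
      fix t assume "t \<in> T"
      then have "q + t *s d \<in> ball z e" using TP by (auto simp: P_def)
      then show "t \<in> {t. q + t *s d \<in> U}" using bU by blast
    qed
    ultimately show ?thesis by (rule holomorphic_on_subset)
  qed
  define K where "K = (\<Sum>i\<in>UNIV. norm (d $ i))"
  have K0: "K \<ge> 0" by (simp add: K_def sum_nonneg)
  define \<rho> where "\<rho> = min r (e - dist z q) / (K + 1)"
  have \<rho>0: "\<rho> > 0" using q r K0 by (simp add: \<rho>_def)
  have small: "norm (t *s d) < min r (e - dist z q)" if "norm t < \<rho>" for t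
  proof -
    have "norm (t *s d) \<le> norm t * K" unfolding K_def by (rule norm_smult_le)
    also have "\<dots> \<le> \<rho> * K" using that K0 by (simp add: mult_right_mono)
    also have "\<dots> < \<rho> * (K + 1)" using \<rho>0 by simp
    also have "\<dots> = min r (e - dist z q)" using K0 by (simp add: \<rho>_def)
    finally show ?thesis .
  qed
  have ballP: "ball 0 \<rho> \<subseteq> P"
  proof
    fix t :: complex assume "t \<in> ball 0 \<rho>"
    then have "norm (t *s d) < e - dist z q" using small by simp
    then have "dist z (q + t *s d) < e" using dist_triangle[of z "q + t *s d" q]
      by (simp add: dist_norm)
    then show "t \<in> P" by (simp add: P_def)
  qed
  have ballT: "ball 0 \<rho> \<subseteq> T" unfolding T_def
    by (rule connected_component_maximal) (use \<rho>0 ballP in auto)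
  have seg: "complex_of_real ` {0..1} \<subseteq> T" unfolding T_def
  proof (rule connected_component_maximal)
    show "0 \<in> complex_of_real ` {0..1}" by force
    show "connected (complex_of_real ` {0..1})"
      by (intro connected_continuous_image continuous_intros) auto
    show "complex_of_real ` {0..1} \<subseteq> P"
    proof
      fix t assume "t \<in> complex_of_real ` {0..1}"
      then obtain s where s: "t = of_real s" "0 \<le> s" "s \<le> 1" by auto
      have "((1 - s) *\<^sub>R q + s *\<^sub>R w) $ i = (q + complex_of_real s *s (w - q)) $ i" for i
      proof -
        have "((1 - s) *\<^sub>R q + s *\<^sub>R w) $ i = (1 - s) *\<^sub>R (q $ i) + s *\<^sub>R (w $ i)" by simp
        also have "\<dots> = of_real (1 - s) * q $ i + of_real s * w $ i" by (simp only: scaleR_conv_of_real)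
        also have "\<dots> = (q + complex_of_real s *s (w - q)) $ i" by (simp add: algebra_simps)
        finally show ?thesis .
      qed
      then have "q + t *s d = (1 - s) *\<^sub>R q + s *\<^sub>R w" by (simp add: vec_eq_iff s d_def)
      moreover have "(1 - s) *\<^sub>R q + s *\<^sub>R w \<in> ball z e"
        using convex_ball[of z e] q w s unfolding convex_def by auto
      ultimately show "t \<in> P" by (simp add: P_def)
    qed
  qed
  have "g 1 = 0"
  proof (rule analytic_continuation[OF holg oT cT ballT])
    show "0 \<in> T" using ballT \<rho>0 by auto
    show "(0::complex) islimpt ball 0 \<rho>" using \<rho>0 islimpt_ball[of "0::complex" 0 \<rho>] by simp
    show "1 \<in> T" using seg by force
    fix t assume "t \<in> ball (0::complex) \<rho>"
    then have "norm (t *s d) < r" using small by simp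
    then show "g t = 0" unfolding g_def by (intro fq) (simp add: dist_norm)
  qed
  then show ?thesis by (simp add: g_def d_def)
qed

lemma convex_closed_orthant: "convex (closed_orthant :: (complex ^ 'n) set)"
  unfolding convex_def closed_orthant_def by (auto intro!: add_nonneg_nonneg mult_nonneg_nonneg)

lemma zero_on_component:
  fixes f :: "complex ^ 'n \<Rightarrow> complex"
  assumes oU: "open U" and hol: "holomorphic_n f U" and OU: "closed_orthant \<subseteq> U"
    and f0: "\<And>z. z \<in> closed_orthant \<Longrightarrow> f z = 0"
  shows "\<forall>z\<in>connected_component_set U 0. f z = 0"
proof -
  define W where "W = connected_component_set U 0"
  have oW: "open W" using oU by (simp add: W_def open_connected_component)
  have cW: "connected W" by (simp add: W_def)
  have WU: "W \<subseteq> U" by (simp add: W_def connected_component_subset)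
  have cO: "connected (closed_orthant :: (complex ^ 'n) set)"
    by (rule convex_connected[OF convex_closed_orthant])
  have O0: "(0 :: complex ^ 'n) \<in> closed_orthant" by (simp add: closed_orthant_def)
  have OW: "closed_orthant \<subseteq> W" unfolding W_def
    by (rule connected_component_maximal[OF O0 cO OU])
  define Z where "Z = {z \<in> W. \<exists>r>0. \<forall>w\<in>ball z r. f w = 0}"
  have oZ: "open Z"
    unfolding open_contains_ball
  proof
    fix z assume "z \<in> Z"
    then obtain r where r: "r > 0" "\<forall>w\<in>ball z r. f w = 0" and zW: "z \<in> W" by (auto simp: Z_def)
    obtain r' where r': "r' > 0" "ball z r' \<subseteq> W" using oW zW open_contains_ball by blast
    have "ball z (min r r') \<subseteq> Z"
    proof
      fix y assume y: "y \<in> ball z (min r r')"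
      have "\<forall>w\<in>ball y (r - dist z y). f w = 0"
      proof
        fix w assume "w \<in> ball y (r - dist z y)"
        then have "dist z w < r" using dist_triangle[of z w y] by (simp add: dist_commute)
        then show "f w = 0" using r(2) by simp
      qed
      moreover have "r - dist z y > 0" using y by simp
      moreover have "y \<in> W" using y r' by auto
      ultimately show "y \<in> Z" unfolding Z_def by blast
    qed
    then show "\<exists>e>0. ball z e \<subseteq> Z" using r r' by (intro exI[of _ "min r r'"]) auto
  qed
  have oWZ: "open (W - Z)"
    unfolding open_contains_ball
  proof
    fix z assume z: "z \<in> W - Z"
    obtain e where e: "e > 0" "ball z e \<subseteq> W" using oW z open_contains_ball by blast
    have "ball z e \<inter> Z = {}"
    proof (rule ccontr)
      assume "ball z e \<inter> Z \<noteq> {}"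
      then obtain q where q: "q \<in> ball z e" "q \<in> Z" by blast
      then obtain r where r: "r > 0" "\<And>w. w \<in> ball q r \<Longrightarrow> f w = 0" by (auto simp: Z_def)
      have "\<forall>w\<in>ball z e. f w = 0"
        using ball_zero_spread[OF hol _ q(1) r] e WU by blast
      then have "z \<in> Z" using z e by (auto simp: Z_def)
      then show False using z by simp
    qed
    then show "\<exists>e>0. ball z e \<subseteq> W - Z" using e by (intro exI[of _ e]) auto
  qed
  define p :: "complex ^ 'n" where "p = (\<chi> i. 1)"
  have pZ: "p \<in> Z"
  proof -
    have "ball p (1/2) \<subseteq> closed_orthant"
    proof
      fix w assume "w \<in> ball p (1/2)"
      then have "norm (w - p) < 1/2" by (simp add: dist_norm norm_minus_commute)
      then have "norm ((w - p) $ i) < 1/2" for i using Finite_Cartesian_Product.norm_nth_le[of "w - p" i] by simp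
      then have hi: "\<bar>Re (w $ i) - 1\<bar> < 1/2" for i
        using abs_Re_le_cmod[of "w $ i - 1"] by (simp add: p_def) (smt (verit) \<open>\<And>i. norm ((w - p) $ i) < 1/2\<close>)
      show "w \<in> closed_orthant" unfolding closed_orthant_def mem_Collect_eq
      proof
        fix i show "0 \<le> Re (w $ i)" using hi[of i] by arith
      qed
    qed
    moreover have "p \<in> closed_orthant" by (simp add: p_def closed_orthant_def)
    ultimately show ?thesis using OW f0 unfolding Z_def by (intro CollectI conjI exI[of _ "1/2"]) auto
  qed
  have "Z \<inter> (W - Z) \<inter> W = {}" by blast
  moreover have "W \<subseteq> Z \<union> (W - Z)" by blast
  ultimately have "Z \<inter> W = {} \<or> (W - Z) \<inter> W = {}" using connectedD[OF cW oZ oWZ] by blast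
  moreover have "Z \<inter> W \<noteq> {}" using pZ by (auto simp: Z_def)
  ultimately have "W \<subseteq> Z" by blast
  then show ?thesis by (auto simp: W_def Z_def)
qed

lemma orthant_zero:
  fixes U :: "(complex, 'n::{finite,linorder}) vec set"
    and f :: "(complex, 'n) vec \<Rightarrow> complex"
    and c :: real
  assumes oU: "open U" and OU: "closed_orthant \<subseteq> U" and hol: "holomorphic_n f U"
    and cpi: "c < pi"
    and bd: "\<exists>C R. \<forall>z\<in>closed_orthant. norm z \<ge> R \<longrightarrow> norm (f z) \<le> C * exp (c * norm1 z)"
    and dw: "\<forall>w\<in>dominant_weights. f w = 0"
  shows "\<forall>z\<in>closed_orthant. f z = 0"
proof -
  obtain C R where CR: "\<And>z. z \<in> closed_orthant \<Longrightarrow> norm z \<ge> R \<Longrightarrow> norm (f z) \<le> C * exp (c * norm1 z)"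
    using bd by blast
  define c' where "c' = max c 0"
  define C' where "C' = max C 0"
  have c': "0 \<le> c'" "c' < pi" using cpi pi_gt_zero by (auto simp: c'_def)
  have C'0: "0 \<le> C'" by (simp add: C'_def)
  have n1: "0 \<le> norm1 z" for z :: "(complex, 'n) vec" by (simp add: norm1_def sum_nonneg)
  have bd': "norm (f z) \<le> C' * exp (c' * norm1 z)" if "z \<in> closed_orthant" "norm z \<ge> R" for z
  proof -
    have "norm (f z) \<le> C * exp (c * norm1 z)" using CR that by blast
    also have "\<dots> \<le> C' * exp (c * norm1 z)" by (intro mult_right_mono) (auto simp: C'_def)
    also have "\<dots> \<le> C' * exp (c' * norm1 z)"
      using C'0 n1[of z] by (intro mult_left_mono) (auto simp: c'_def intro!: mult_right_mono)
    finally show ?thesis .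
  qed
  define upset where "upset = (\<lambda>A::'n set. \<forall>i\<in>A. \<forall>i'. i \<le> i' \<longrightarrow> i' \<in> A)"
  define cond where "cond = (\<lambda>(A::'n set) (z::(complex, 'n) vec). \<exists>k::'n \<Rightarrow> nat.
      (\<forall>i\<in>A. z $ i = of_nat (k i)) \<and> (\<forall>i\<in>A. \<forall>j\<in>A. i \<le> j \<longrightarrow> k j \<le> k i))"
  have main: "\<forall>A. card (- A) = n \<longrightarrow> upset A \<longrightarrow> (\<forall>z\<in>closed_orthant. cond A z \<longrightarrow> f z = 0)" for n
  proof (induction n)
    case 0
    show ?case
    proof (intro allI impI ballI)
      fix A z assume A: "card (- A) = 0" and z: "z \<in> closed_orthant" and cz: "cond A z"
      have "- A = {}" using A by simp
      then have "A = UNIV" by (metis compl_le_swap1 top.extremum_uniqueI empty_subsetI double_compl)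
      then obtain k where k: "\<And>i. z $ i = of_nat (k i)" "\<And>i j. i \<le> j \<Longrightarrow> k j \<le> k i"
        using cz by (auto simp: cond_def)
      define kk :: "(nat, 'n) vec" where "kk = (\<chi> i. k i)"
      have "z = (\<chi> i. of_nat (kk $ i))" using k by (simp add: vec_eq_iff kk_def)
      moreover have "\<forall>i j. i \<le> j \<longrightarrow> kk $ j \<le> kk $ i" using k by (simp add: kk_def)
      ultimately have "z \<in> dominant_weights" unfolding dominant_weights_def by blast
      then show "f z = 0" using dw by blast
    qed
  next
    case (Suc n)
    show ?case
    proof (intro allI impI ballI)
      fix A z assume A: "card (- A) = Suc n" and uA: "upset A" and z: "z \<in> closed_orthant" and cz: "cond A z"
      have ne: "- A \<noteq> {}" using A by auto
      define j where "j = Max (- A)"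
      have "j \<in> - A" unfolding j_def using ne by (intro Max_in) auto
      then have jA: "j \<notin> A" by simp
      have jmax: "i \<le> j" if "i \<notin> A" for i unfolding j_def using that by (intro Max_ge) auto
      define A' where "A' = insert j A"
      have cA': "card (- A') = n"
      proof -
        have "- A' = (- A) - {j}" by (auto simp: A'_def)
        then show ?thesis using A jA by simp
      qed
      have uA': "upset A'" unfolding upset_def
      proof (intro ballI allI impI)
        fix i i' assume i: "i \<in> A'" and ii': "i \<le> i'"
        show "i' \<in> A'"
        proof (cases "i \<in> A")
          case True then show ?thesis using uA ii' by (auto simp: upset_def A'_def)
        next
          case False
          then have "i = j" using i by (simp add: A'_def)
          show ?thesis
          proof (cases "i' = j")
            case True then show ?thesis by (simp add: A'_def)
          next
            case False
            then have "i' \<in> A" using jmax[of i'] ii' \<open>i = j\<close> by force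
            then show ?thesis by (simp add: A'_def)
          qed
        qed
      qed
      have IH: "\<And>z. z \<in> closed_orthant \<Longrightarrow> cond A' z \<Longrightarrow> f z = 0" using Suc.IH cA' uA' by blast
      obtain k where k: "\<And>i. i \<in> A \<Longrightarrow> z $ i = of_nat (k i)" "\<And>i i'. i \<in> A \<Longrightarrow> i' \<in> A \<Longrightarrow> i \<le> i' \<Longrightarrow> k i' \<le> k i"
        using cz by (auto simp: cond_def)
      define m0 where "m0 = (if A = {} then 0 else Max (k ` A))"
      have km0: "k i \<le> m0" if "i \<in> A" for i using that by (auto simp: m0_def)
      define e :: "(complex, 'n) vec" where "e = axis j 1"
      define q :: "(complex, 'n) vec" where "q = (\<chi> i. if i = j then 0 else z $ i)"
      define L where "L = (\<lambda>t. q + t *s e)"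
      have Li: "L t $ i = (if i = j then t else z $ i)" for t i
        by (simp add: L_def q_def e_def axis_def)
      have Lz: "L (z $ j) = z" by (simp add: vec_eq_iff Li)
      have LO: "L t \<in> closed_orthant" if "Re t \<ge> 0" for t
        using z that by (auto simp: closed_orthant_def Li)
      define g where "g = (\<lambda>t. f (L t))"
      define S where "S = {t. L t \<in> U}"
      have oS: "open S"
      proof -
        have "open (L -` U)" unfolding L_def by (rule continuous_open_vimage[OF oU]) (rule isCont_line)
        then show ?thesis by (simp add: S_def vimage_def)
      qed
      have HS: "{t. Re t \<ge> 0} \<subseteq> S" using LO OU by (auto simp: S_def)
      have holg: "g holomorphic_on S" unfolding g_def S_def L_def by (rule line_holomorphic[OF hol])
      define K where "K = norm1 q"
      have nL: "norm1 (L t) = K + norm t" for t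
      proof -
        have "norm (L t $ i) = norm (q $ i) + (if i = j then norm t else 0)" for i
          by (simp add: Li q_def)
        then have "norm1 (L t) = (\<Sum>i\<in>UNIV. norm (q $ i) + (if i = j then norm t else 0))"
          by (simp add: norm1_def)
        also have "\<dots> = K + norm t" by (simp add: sum.distrib K_def norm1_def)
        finally show ?thesis .
      qed
      have gb: "norm (g t) \<le> (C' * exp (c' * K)) * exp (c' * norm t)" if "Re t \<ge> 0" "norm t \<ge> R" for t
      proof -
        have "norm t \<le> norm (L t)" using Finite_Cartesian_Product.norm_nth_le[of "L t" j] by (simp add: Li)
        then have "norm (g t) \<le> C' * exp (c' * norm1 (L t))" unfolding g_def
          using that LO by (intro bd') auto
        also have "\<dots> = (C' * exp (c' * K)) * exp (c' * norm t)"
          by (simp add: nL distrib_left exp_add)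
        finally show ?thesis .
      qed
      have gz: "g (of_nat (m0 + n')) = 0" for n'
      proof -
        have "L (of_nat (m0 + n')) \<in> closed_orthant" by (rule LO) simp
        moreover have "cond A' (L (of_nat (m0 + n')))"
          unfolding cond_def
        proof (intro exI[of _ "k(j := m0 + n')"] conjI ballI impI)
          fix i assume "i \<in> A'"
          then show "L (of_nat (m0 + n')) $ i = of_nat ((k(j := m0 + n')) i)"
            using k(1) by (auto simp: Li A'_def)
        next
          fix i i' assume i: "i \<in> A'" and i': "i' \<in> A'" and ii': "i \<le> i'"
          show "(k(j := m0 + n')) i' \<le> (k(j := m0 + n')) i"
          proof (cases "i = j")
            case True
            then show ?thesis using i' km0[of i'] by (auto simp: A'_def)
          next
            case False
            then have iA: "i \<in> A" using i by (simp add: A'_def)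
            then have "i' \<in> A" using uA ii' by (auto simp: upset_def)
            then have "i' \<noteq> j" using jA by auto
            then show ?thesis using k(2)[OF iA \<open>i' \<in> A\<close> ii'] False by simp
          qed
        qed
        ultimately show ?thesis unfolding g_def by (rule IH)
      qed
      have "g (z $ j) = 0"
        by (rule slice_carlson[OF oS HS holg c' gb gz]) (use z in \<open>auto simp: closed_orthant_def\<close>)
      then show "f z = 0" by (simp add: g_def Lz)
    qed
  qed
  show ?thesis
  proof
    fix z :: "(complex, 'n) vec" assume z: "z \<in> closed_orthant"
    have "upset {}" by (simp add: upset_def)
    moreover have "cond {} z" by (simp add: cond_def)
    ultimately show "f z = 0" using main[of "card (- ({} :: 'n set))"] z by blast
  qed
qed

theorem lemma5p2:
  fixes U :: "(complex, 'n::{finite,linorder}) vec set"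
    and f :: "(complex, 'n) vec \<Rightarrow> complex"
    and c :: real
  assumes "open U"
    and "closed_orthant \<subseteq> U"
    and "holomorphic_n f U"
    and "c < pi"
    and "\<exists>C R. \<forall>z\<in>closed_orthant. norm z \<ge> R \<longrightarrow> norm (f z) \<le> C * exp (c * norm1 z)"
    and "\<forall>w\<in>dominant_weights. f w = 0"
  shows "\<forall>z\<in>connected_component_set U 0. f z = 0"
proof -
  have "\<forall>z\<in>closed_orthant. f z = 0" by (rule orthant_zero[OF assms])
  then show ?thesis using zero_on_component[OF assms(1) assms(3) assms(2)] by blast
qed

end
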